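(* Under the standing hypotheses (S), for every $\xi\in\mathbb H$ and $n\ge0$, \[\frac1{2\tau}\Big(\|\xi-X_{n+1}^\tau\|^2_{\mathbb H}-\|\xi-X_n^\tau\|^2_{\mathbb H}\Big)+\frac\lambda4\Big(\|\xi-X_n^\tau\|^2_{\mathbb H}+\|\xi-X_{n+1}^\tau\|^2_{\mathbb H}\Big)\] \[\le\phi^{\#}_{\rho_0}(\xi)-\phi^{\#}_{\rho_0}(X_{n+1}^\tau)+\frac\tau4\Big(\|\nabla\phi^{\#}_{\rho_0}(X_n^\tau)\|^2_{\mathbb H}-\|\nabla\phi^{\#}_{\rho_0}(X_{n+1}^\tau)\|^2_{\mathbb H}\Big)-\Big(\frac1{2\tau}+\frac\lambda4\Big)\|X_n^\tau-X_{n+1}^\tau\|^2_{\mathbb H}.\]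
   Context: Standing hypotheses (S): $\rho_0\in\mathcal P_2(\mathbb R^d)$; $\mathbb H=L^2(\mathbb R^d;\rho_0)$ is the Hilbert space of $\rho_0$-square-integrable maps $\mathbb R^d\to\mathbb R^d$ with $\langle\xi_1,\xi_2\rangle_{\mathbb H}=\int\langle\xi_1,\xi_2\rangle d\rho_0$; $\phi:\mathcal P_2(\mathbb R^d)\to\mathbb R$ has lift $\phi^{\#}_{\rho_0}(\xi):=\phi(\xi_{\#}\rho_0)$ which is Fréchet differentiable on $\mathbb H$ (gradient $\nabla\phi^{\#}_{\rho_0}$), $\lambda$-convex on $\mathbb H$ for some $\lambda\in\mathbb R$ (i.e. $\phi^{\#}_{\rho_0}((1-t)\xi_1+t\xi_2)\le(1-t)\phi^{\#}_{\rho_0}(\xi_1)+t\phi^{\#}_{\rho_0}(\xi_2)-\frac\lambda2t(1-t)\|\xi_1-\xi_2\|_{\mathbb H}^2$), and $\inf_{\mathbb H}\phi^{\#}_{\rho_0}>-\infty$; the time step $\tau>0$ satisfies $\lambda/2+1/\tau>0$; $X_0^\tau\in\mathbb H$. Lagrangian trapezoidal scheme: $X_{n+1}^\tau$ is the (unique) minimizer over $\xi\in\mathbb H$ of $\tfrac12\phi^{\#}_{\rho_0}(\xi)+\tfrac12\langle\nabla\phi^{\#}_{\rho_0}(X_n^\tau),\xi\rangle_{\mathbb H}+\tfrac1{2\tau}\|\xi-X_n^\tau\|^2_{\mathbb H}$; equivalently $X_{n+1}^\tau=X_n^\tau-\frac\tau2\big(\nabla\phi^{\#}_{\rho_0}(X_{n+1}^\tau)+\nabla\phi^{\#}_{\rho_0}(X_n^\tau)\big)$.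 *)

theory Defs
  imports "HOL-Analysis.Analysis"
begin

text \<open>The Hilbert space H = L2(R^d; rho0) is modelled by an arbitrary real Hilbert space
  type 'a (class real_inner + complete_space); the lift phi# of phi is the function F on it.\<close>

definition lambda_convex :: "real \<Rightarrow> ('a::real_normed_vector \<Rightarrow> real) \<Rightarrow> bool" where
  "lambda_convex lam F \<longleftrightarrow>
     (\<forall>x1 x2 t. 0 \<le> t \<and> t \<le> 1 \<longrightarrow>
        F ((1 - t) *\<^sub>R x1 + t *\<^sub>R x2)
          \<le> (1 - t) * F x1 + t * F x2 - lam / 2 * t * (1 - t) * (norm (x1 - x2))\<^sup>2)"

definition trap_functional ::
    "('a::real_inner \<Rightarrow> real) \<Rightarrow> ('a \<Rightarrow> 'a) \<Rightarrow> real \<Rightarrow> 'a \<Rightarrow> 'a \<Rightarrow> real" where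
  "trap_functional F G tau x z =
     F z / 2 + inner (G x) z / 2 + (norm (z - x))\<^sup>2 / (2 * tau)"

definition trap_step ::
    "('a::real_inner \<Rightarrow> real) \<Rightarrow> ('a \<Rightarrow> 'a) \<Rightarrow> real \<Rightarrow> 'a \<Rightarrow> 'a \<Rightarrow> bool" where
  "trap_step F G tau x y \<longleftrightarrow>
     (\<forall>z. trap_functional F G tau x y \<le> trap_functional F G tau x z)"

end

theory Submission
  imports Defs
begin

lemma first_order:
  fixes F :: "'a::real_inner \<Rightarrow> real"
  assumes grad: "\<And>x. (F has_derivative (\<lambda>h. inner (G x) h)) (at x)"
    and conv: "lambda_convex lam F"
  shows "F z \<ge> F w + inner (G w) (z - w) + lam / 2 * (norm (z - w))\<^sup>2"
proof -
  define f where "f t = F (w + t *\<^sub>R (z - w))" for t :: real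
  have "((\<lambda>t. w + t *\<^sub>R (z - w)) has_derivative (\<lambda>t. t *\<^sub>R (z - w))) (at 0)"
    by (auto intro!: derivative_eq_intros)
  from has_derivative_compose[OF this grad[of "w + 0 *\<^sub>R (z - w)"]]
  have "(f has_derivative (\<lambda>t. inner (G w) (t *\<^sub>R (z - w)))) (at 0)"
    by (simp add: f_def[abs_def] o_def)
  moreover have eq: "(\<lambda>t. inner (G w) (t *\<^sub>R (z - w))) = (*) (inner (G w) (z - w))"
    by (rule ext) (simp add: mult.commute)
  ultimately have "(f has_field_derivative inner (G w) (z - w)) (at 0)"
    by (simp add: has_field_derivative_def)
  hence L: "((\<lambda>h. (f (0 + h) - f 0) / h) \<longlongrightarrow> inner (G w) (z - w)) (at_right 0)"
    unfolding DERIV_def by (rule filterlim_mono) (auto simp: at_le)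
  have R: "((\<lambda>h. F z - F w - lam / 2 * (1 - h) * (norm (z - w))\<^sup>2) \<longlongrightarrow>
      F z - F w - lam / 2 * (1 - 0) * (norm (z - w))\<^sup>2) (at_right 0)"
    by (intro tendsto_intros)
  have E: "eventually (\<lambda>h. (f (0 + h) - f 0) / h \<le> F z - F w - lam / 2 * (1 - h) * (norm (z - w))\<^sup>2) (at_right 0)"
  proof -
    have "eventually (\<lambda>h. h \<in> {0<..<1}) (at_right (0::real))"
      by (rule eventually_at_right_real) simp
    thus ?thesis
    proof eventually_elim
      case (elim h)
      hence h: "0 < h" "h < 1" by auto
      have "F ((1 - h) *\<^sub>R w + h *\<^sub>R z) \<le> (1 - h) * F w + h * F z - lam / 2 * h * (1 - h) * (norm (w - z))\<^sup>2"
        using conv h unfolding lambda_convex_def by auto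
      moreover have "(1 - h) *\<^sub>R w + h *\<^sub>R z = w + h *\<^sub>R (z - w)" by (simp add: algebra_simps)
      moreover have "norm (w - z) = norm (z - w)" by (rule norm_minus_commute)
      ultimately have "f h - f 0 \<le> h * (F z - F w - lam / 2 * (1 - h) * (norm (z - w))\<^sup>2)"
        unfolding f_def by (simp add: algebra_simps)
      thus ?case using h by (simp add: divide_le_eq mult.commute)
    qed
  qed
  have "inner (G w) (z - w) \<le> F z - F w - lam / 2 * (1 - 0) * (norm (z - w))\<^sup>2"
    by (rule tendsto_le[OF _ R L E]) simp
  thus ?thesis by simp
qed

lemma euler_lagrange:
  fixes F :: "'a::real_inner \<Rightarrow> real"
  assumes grad: "\<And>x. (F has_derivative (\<lambda>h. inner (G x) h)) (at x)"
    and st: "trap_step F G tau x y" and tau: "tau \<noteq> 0"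
  shows "(1/2) *\<^sub>R G y + (1/2) *\<^sub>R G x + (1 / tau) *\<^sub>R (y - x) = 0"
proof -
  define v where "v = (1/2) *\<^sub>R G y + (1/2) *\<^sub>R G x + (1 / tau) *\<^sub>R (y - x)"
  have D: "(trap_functional F G tau x has_derivative
     (\<lambda>k. inner (G y) k / 2 + inner (G x) k / 2 + (inner k (y - x) + inner (y - x) k) / (2 * tau))) (at y)"
    unfolding trap_functional_def[abs_def] power2_norm_eq_inner
    using tau by (auto intro!: derivative_eq_intros grad ext simp: field_simps)
  have "eventually (\<lambda>z. trap_functional F G tau x y \<le> trap_functional F G tau x z) (at y)"
    using st unfolding trap_step_def by simp
  from has_derivative_local_min[OF D this]
  have "inner (G y) v / 2 + inner (G x) v / 2 + (inner v (y - x) + inner (y - x) v) / (2 * tau) = 0"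
    by metis
  moreover have "inner v v = inner ((1/2) *\<^sub>R G y + (1/2) *\<^sub>R G x + (1 / tau) *\<^sub>R (y - x)) v"
    using v_def by metis
  moreover have "\<dots> = inner (G y) v / 2 + inner (G x) v / 2 + inner (y - x) v / tau"
    by (simp only: inner_add_left inner_scaleR_left) simp
  moreover have "inner v (y - x) = inner (y - x) v" by (rule inner_commute)
  ultimately have "inner v v = 0" by simp
  thus ?thesis by (simp add: v_def)
qed

lemma alg:
  fixes tau lam Fxi Fy Fx ga ha hd gd ad na nb nd nh ng :: real
  assumes "tau > 0" "Fxi \<ge> Fy + ga + lam/2 * na" "Fxi \<ge> Fx + (ha + hd) + lam/2 * nb"
    "Fx \<ge> Fy + - gd + lam/2 * nd" "ga + ha = - (2/tau) * ad" "tau/4 * (nh - ng) = 1/2 * (gd - hd)"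
    "nb = na + 2 * ad + nd"
  shows "1/(2*tau) * (na - nb) + lam/4 * (nb + na) \<le> Fxi - Fy + tau/4 * (nh - ng) - (1/(2*tau) + lam/4) * nd"
proof -
  have ga: "ga = - (2/tau) * ad - ha" using assms(5) by linarith
  have "Fxi - Fy + tau/4 * (nh - ng) - (1/(2*tau) + lam/4) * nd - (1/(2*tau) * (na - nb) + lam/4 * (nb + na))
     = ((Fxi - Fy - ga - lam/2*na) + (Fxi - Fx - (ha + hd) - lam/2*nb) + (Fx - Fy + gd - lam/2*nd))/2"
    unfolding assms(6) assms(7) ga using assms(1) by (simp add: field_simps)
  moreover have "0 \<le> ((Fxi - Fy - ga - lam/2*na) + (Fxi - Fx - (ha + hd) - lam/2*nb) + (Fx - Fy + gd - lam/2*nd))/2"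
  proof -
    have "0 \<le> Fxi - Fy - ga - lam/2*na" "0 \<le> Fxi - Fx - (ha + hd) - lam/2*nb" "0 \<le> Fx - Fy + gd - lam/2*nd"
      using assms(2-4) by linarith+
    thus ?thesis by simp
  qed
  ultimately show ?thesis by linarith
qed

theorem mainTheorem9:
  fixes F :: "'a::{real_inner, complete_space} \<Rightarrow> real"
    and G :: "'a \<Rightarrow> 'a"
    and lam tau :: real
    and X :: "nat \<Rightarrow> 'a"
    and \<xi> :: 'a
    and n :: nat
  assumes grad: "\<And>x. (F has_derivative (\<lambda>h. inner (G x) h)) (at x)"
    and conv: "lambda_convex lam F"
    and bdd: "bdd_below (range F)"
    and tau: "tau > 0"
    and step_cond: "lam / 2 + 1 / tau > 0"
    and scheme: "\<And>k. trap_step F G tau (X k) (X (Suc k))"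
  shows "1 / (2 * tau) * ((norm (\<xi> - X (Suc n)))\<^sup>2 - (norm (\<xi> - X n))\<^sup>2)
           + lam / 4 * ((norm (\<xi> - X n))\<^sup>2 + (norm (\<xi> - X (Suc n)))\<^sup>2)
         \<le> F \<xi> - F (X (Suc n))
           + tau / 4 * ((norm (G (X n)))\<^sup>2 - (norm (G (X (Suc n))))\<^sup>2)
           - (1 / (2 * tau) + lam / 4) * (norm (X n - X (Suc n)))\<^sup>2"
proof -
  define x where "x = X n"
  define y where "y = X (Suc n)"
  define a where "a = \<xi> - y"
  define d where "d = y - x"
  have b: "\<xi> - x = a + d" by (simp add: a_def d_def)
  have nd: "norm (x - y) = norm d" by (simp add: d_def norm_minus_commute)
  have EL: "(1/2) *\<^sub>R G y + (1/2) *\<^sub>R G x + (1 / tau) *\<^sub>R (y - x) = 0"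
    using euler_lagrange[OF grad scheme[of n]] tau by (simp add: x_def y_def)
  have gh: "G y + G x = - (2 / tau) *\<^sub>R d"
  proof -
    have "G y + G x = 2 *\<^sub>R ((1/2) *\<^sub>R G y + (1/2) *\<^sub>R G x)"
      by (simp only: scaleR_add_right scaleR_scaleR) simp
    also have "(1/2) *\<^sub>R G y + (1/2) *\<^sub>R G x = - ((1 / tau) *\<^sub>R d)"
      using EL unfolding d_def by (simp only: eq_neg_iff_add_eq_0)
    finally show ?thesis by simp
  qed
  have A: "F \<xi> \<ge> F y + inner (G y) a + lam / 2 * (norm a)\<^sup>2"
    using first_order[OF grad conv, where z=\<xi> and w=y] by (simp add: a_def)
  have B: "F \<xi> \<ge> F x + inner (G x) (a + d) + lam / 2 * (norm (a + d))\<^sup>2"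
    using first_order[OF grad conv, where z=\<xi> and w=x] by (simp add: b)
  have D: "F x \<ge> F y + inner (G y) (x - y) + lam / 2 * (norm d)\<^sup>2"
    using first_order[OF grad conv, where z=x and w=y] nd by simp
  have xy: "x - y = - d" by (simp add: d_def)
  have E1: "inner (G y) a + inner (G x) a = - (2 / tau) * inner d a"
  proof -
    have "inner (G y) a + inner (G x) a = inner (G y + G x) a" by (simp add: inner_add_left)
    thus ?thesis by (simp add: gh)
  qed
  have E2: "tau / 4 * ((norm (G x))\<^sup>2 - (norm (G y))\<^sup>2) = 1/2 * (inner (G y) d - inner (G x) d)"
  proof -
    have "(norm (G y))\<^sup>2 - (norm (G x))\<^sup>2 = inner (G y - G x) (G y + G x)"
      by (simp add: power2_norm_eq_inner inner_add_right inner_diff_left inner_diff_right inner_commute[of "G x" "G y"])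
    also have "\<dots> = - (2 / tau) * (inner (G y) d - inner (G x) d)"
      by (simp add: gh inner_diff_left)
    finally show ?thesis using tau by (simp add: field_simps)
  qed
  have E3: "(norm (a + d))\<^sup>2 = (norm a)\<^sup>2 + 2 * inner a d + (norm d)\<^sup>2"
    by (simp add: power2_norm_eq_inner inner_add_left inner_add_right inner_commute)
  have E4: "inner (G x) (a + d) = inner (G x) a + inner (G x) d" by (simp add: inner_add_right)
  have E5: "inner (G y) (x - y) = - inner (G y) d" by (simp add: xy)
  have E6: "inner d a = inner a d" by (rule inner_commute)
  have goal: "1 / (2 * tau) * ((norm a)\<^sup>2 - (norm (a + d))\<^sup>2)
           + lam / 4 * ((norm (a + d))\<^sup>2 + (norm a)\<^sup>2)
         \<le> F \<xi> - F y
           + tau / 4 * ((norm (G x))\<^sup>2 - (norm (G y))\<^sup>2)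
           - (1 / (2 * tau) + lam / 4) * (norm d)\<^sup>2"
    apply (rule alg[where ga="inner (G y) a" and ha="inner (G x) a" and hd="inner (G x) d"
          and gd="inner (G y) d" and ad="inner a d" and Fx="F x"])
          apply (rule tau)
         apply (rule A)
        using B unfolding E4 apply (simp only: add.assoc)
       using D unfolding E5 apply (simp only: add.assoc)
      using E1 E6 apply (simp only:)
     apply (rule E2)
    apply (rule E3)
    done
  show ?thesis using goal unfolding nd[symmetric] b[symmetric] unfolding a_def x_def y_def .

qed

end
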